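(* Let $\mathcal V_{r_p}=\{\bm v_1,\ldots,\bm v_{r_p}\}\subset\mathbb R^q$ be the UD skeleton, let $\mathcal K$ be a reproducing kernel on $[0,1]^q\times[0,1]^q$, and let $f:[0,1]^q\to\mathbb R$ have $V_2(f,\mathcal K)<\infty$ and be such that $\varphi_f(\bm z)=f(T_{\bm Z}(\bm z))$ is Lipschitz on $\mathcal Z\cup\mathcal V_{r_p}$ with constant $L_f$. Then for $\phi_f(\bm x)=f(\mathcal T(\bm x))$, \[ \left|\int\phi_f\,dP_{\mathcal S_1,\bm X}-\int\phi_f\,dP_{\mathcal S_0,\bm X}\right|\le L_f\bigl(\delta_1^{(\mathrm{rot})}+\delta_0^{(\mathrm{rot})}\bigr). \]
   Context: Data: $(Y_i,W_i,\bm X_i)$, $i=1,\ldots,n$, with $W_i\in\{0,1\}$, $\bm X_i\in\mathbb R^p$; both arms nonempty. Let $\bar{\bm X}=n^{-1}\sum_i\bm X_i$, $\widehat{\bm D}$ the diagonal matrix of (positive) sample standard deviations, $\widetilde{\bm X}_i=\widehat{\bm D}^{-1}(\bm X_i-\bar{\bm X})$, $\widetilde{\bm X}=\bm U\bm\Sigma\bm V^\top$ the SVD (singular values decreasing) of the matrix with rows $\widetilde{\bm X}_i^\top$; for chosen $q\le p$, $\bm V_q$ = first $q$ columns of $\bm V$, $\Pi_q(\bm x)=\bm V_q^\top\widehat{\bm D}^{-1}(\bm x-\bar{\bm X})$, $\bm Z_i=\Pi_q(\bm X_i)$, $\mathcal Z=\{\bm Z_i\}_{i=1}^n$. $\widehat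 F_{Z^{(d)}}$ is the empirical CDF of $\{Z_i^{(d)}\}_i$, $T_{\bm Z}(\bm z)=(\widehat F_{Z^{(1)}}(z^{(1)}),\ldots,\widehat F_{Z^{(q)}}(z^{(q)}))^\top$, $\mathcal T(\bm x)=T_{\bm Z}(\Pi_q(\bm x))$. The UD skeleton $\mathcal V_{r_p}=\{\bm v_j\}\subset\mathbb R^q$ has $\bm v_j=(\widehat F^{-1}_{Z^{(1)}}(u_{j1}),\ldots,\widehat F^{-1}_{Z^{(q)}}(u_{jq}))^\top$ for a design $\{\bm u_j\}\subset[0,1]^q$. For $g\in\{0,1\}$, $i_j^g\in\arg\min_{i:W_i=g}\|\bm Z_i-\bm v_j\|_2$, $\mathcal S_g=\{i_j^g\}_{j=1}^{r_p}$, $\delta_g^{(\mathrm{rot})}=\max_j\|\bm Z_{i_j^g}-\bm v_j\|_2$, and $P_{\mathcal S_g,\bm X}=r_p^{-1}\sum_{j=1}^{r_p}\delta_{\bm X_{i_j^g}}$. $V_2(f,\mathcal K)$ is the generalized (Hickernell) variation of $f$ with respect to $\mathcal K$ (the quantity appearing in the Koksma–Hlawka inequality $|n^{-1}\sum_i f(T_{\bm Z}(\bm Z_i))-m^{-1}\sum_k f(T_{\bm Z}(\bm\xi_k))|\le D(\{\bm\xi_k\};\mathcal Z,\mathcal K)V_2(f,\mathcal K)$, with $D$ the generalized empirical $F$-discrepancy). *)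

theory Defs
  imports Complex_Main
begin

text \<open>Vectors in R^k are represented as functions nat => real, only the
coordinates below k being meaningful. Data matrix X : nat => nat => real,
X i k = k-th covariate of unit i (i < n, k < p).\<close>

definition smean :: "nat \<Rightarrow> (nat \<Rightarrow> nat \<Rightarrow> real) \<Rightarrow> nat \<Rightarrow> real" where
  "smean n X k = (\<Sum>i<n. X i k) / real n"

definition ssd :: "nat \<Rightarrow> (nat \<Rightarrow> nat \<Rightarrow> real) \<Rightarrow> nat \<Rightarrow> real" where
  "ssd n X k = sqrt ((\<Sum>i<n. (X i k - smean n X k)^2) / (real n - 1))"

definition standardize :: "nat \<Rightarrow> (nat \<Rightarrow> nat \<Rightarrow> real) \<Rightarrow> nat \<Rightarrow> nat \<Rightarrow> real" where
  "standardize n X i k = (X i k - smean n X k) / ssd n X k"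

definition is_svd :: "nat \<Rightarrow> nat \<Rightarrow> (nat \<Rightarrow> nat \<Rightarrow> real) \<Rightarrow> (nat \<Rightarrow> nat \<Rightarrow> real)
    \<Rightarrow> (nat \<Rightarrow> real) \<Rightarrow> (nat \<Rightarrow> nat \<Rightarrow> real) \<Rightarrow> bool" where
  "is_svd n p A U s V \<longleftrightarrow>
     (\<forall>a<n. \<forall>b<n. (\<Sum>i<n. U i a * U i b) = (if a = b then 1 else 0)) \<and>
     (\<forall>a<p. \<forall>b<p. (\<Sum>k<p. V k a * V k b) = (if a = b then 1 else 0)) \<and>
     (\<forall>l<min n p. 0 \<le> s l) \<and>
     (\<forall>l l'. l \<le> l' \<and> l' < min n p \<longrightarrow> s l' \<le> s l) \<and>
     (\<forall>i<n. \<forall>k<p. A i k = (\<Sum>l<min n p. U i l * s l * V k l))"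

definition proj :: "nat \<Rightarrow> nat \<Rightarrow> (nat \<Rightarrow> nat \<Rightarrow> real) \<Rightarrow> (nat \<Rightarrow> nat \<Rightarrow> real) \<Rightarrow> nat
    \<Rightarrow> (nat \<Rightarrow> real) \<Rightarrow> (nat \<Rightarrow> real)" where
  "proj n p X V q x = (\<lambda>d. if d < q then (\<Sum>k<p. V k d * ((x k - smean n X k) / ssd n X k)) else 0)"

definition ecdf :: "nat \<Rightarrow> (nat \<Rightarrow> nat \<Rightarrow> real) \<Rightarrow> nat \<Rightarrow> real \<Rightarrow> real" where
  "ecdf n Z d t = real (card {i. i < n \<and> Z i d \<le> t}) / real n"

definition Tmap :: "nat \<Rightarrow> nat \<Rightarrow> (nat \<Rightarrow> nat \<Rightarrow> real) \<Rightarrow> (nat \<Rightarrow> real) \<Rightarrow> (nat \<Rightarrow> real)" where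
  "Tmap n q Z z = (\<lambda>d. if d < q then ecdf n Z d (z d) else 0)"

definition ecdf_inv :: "nat \<Rightarrow> (nat \<Rightarrow> nat \<Rightarrow> real) \<Rightarrow> nat \<Rightarrow> real \<Rightarrow> real" where
  "ecdf_inv n Z d u = Min {Z i d | i. i < n \<and> u \<le> ecdf n Z d (Z i d)}"

definition skeleton :: "nat \<Rightarrow> nat \<Rightarrow> (nat \<Rightarrow> nat \<Rightarrow> real) \<Rightarrow> (nat \<Rightarrow> nat \<Rightarrow> real) \<Rightarrow> nat \<Rightarrow> (nat \<Rightarrow> real)" where
  "skeleton n q Z u j = (\<lambda>d. if d < q then ecdf_inv n Z d (u j d) else 0)"

definition distq :: "nat \<Rightarrow> (nat \<Rightarrow> real) \<Rightarrow> (nat \<Rightarrow> real) \<Rightarrow> real" where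
  "distq q a b = sqrt (\<Sum>d<q. (a d - b d)^2)"

end

theory Submission
  imports Defs
begin

theorem theorem2:
  fixes n p q r :: nat
    and X :: "nat \<Rightarrow> nat \<Rightarrow> real" and W :: "nat \<Rightarrow> bool"
    and U V :: "nat \<Rightarrow> nat \<Rightarrow> real" and s :: "nat \<Rightarrow> real"
    and u :: "nat \<Rightarrow> nat \<Rightarrow> real"
    and f :: "(nat \<Rightarrow> real) \<Rightarrow> real" and L :: real
    and sel :: "bool \<Rightarrow> nat \<Rightarrow> nat"
    and Z :: "nat \<Rightarrow> nat \<Rightarrow> real" and v :: "nat \<Rightarrow> nat \<Rightarrow> real"
    and \<delta> :: "bool \<Rightarrow> real"
  assumes treated: "\<exists>i<n. W i" and control: "\<exists>i<n. \<not> W i"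
    and sd_pos: "\<forall>k<p. ssd n X k > 0"
    and svd: "is_svd n p (standardize n X) U s V"
    and q: "1 \<le> q" "q \<le> p"
    and r: "1 \<le> r"
    and design: "\<forall>j<r. \<forall>d<q. 0 \<le> u j d \<and> u j d \<le> 1"
    and Z_def: "Z = (\<lambda>i. proj n p X V q (X i))"
    and v_def: "v = skeleton n q Z u"
    and sel: "\<forall>g j. j < r \<longrightarrow> sel g j < n \<and> W (sel g j) = g \<and>
               (\<forall>i<n. W i = g \<longrightarrow> distq q (Z (sel g j)) (v j) \<le> distq q (Z i) (v j))"
    and \<delta>_def: "\<delta> = (\<lambda>g. Max ((\<lambda>j. distq q (Z (sel g j)) (v j)) ` {..<r}))"
    and lipschitz: "\<forall>a\<in>Z ` {..<n} \<union> v ` {..<r}. \<forall>b\<in>Z ` {..<n} \<union> v ` {..<r}.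
               \<bar>f (Tmap n q Z a) - f (Tmap n q Z b)\<bar> \<le> L * distq q a b"
  shows "\<bar>(\<Sum>j<r. f (Tmap n q Z (proj n p X V q (X (sel True j))))) / real r
          - (\<Sum>j<r. f (Tmap n q Z (proj n p X V q (X (sel False j))))) / real r\<bar>
         \<le> L * (\<delta> True + \<delta> False)"
proof -
  let ?F = "\<lambda>g j. f (Tmap n q Z (Z (sel g j)))"
  let ?d = "\<lambda>g j. distq q (Z (sel g j)) (v j)"
  have dnn: "0 \<le> distq q a b" for a b unfolding distq_def by (simp add: sum_nonneg)
  have mem1: "Z (sel g j) \<in> Z ` {..<n} \<union> v ` {..<r}" if "j < r" for g j
    using sel that by blast
  have mem2: "v j \<in> Z ` {..<n} \<union> v ` {..<r}" if "j < r" for j using that by blast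
  have lip: "\<bar>?F g j - f (Tmap n q Z (v j))\<bar> \<le> L * ?d g j" if "j < r" for g j
    using lipschitz mem1[OF that] mem2[OF that] by blast
  have Ld: "0 \<le> L * ?d g j" if "j < r" for g j using lip[OF that, of g] by linarith
  have dle: "?d g j \<le> \<delta> g" if "j < r" for g j
    unfolding \<delta>_def using that by (intro Max_ge) auto
  have Lmono: "L * ?d g j \<le> L * \<delta> g" if "j < r" for g j
  proof (cases "L \<ge> 0")
    case True thus ?thesis using dle[OF that] by (simp add: mult_left_mono)
  next
    case False
    have "{..<r} \<noteq> {}" using r by (metis lessThan_empty_iff not_one_le_zero)
    hence "\<delta> g \<in> (\<lambda>j. ?d g j) ` {..<r}" unfolding \<delta>_def by (intro Max_in) auto
    then obtain k where k: "k < r" "\<delta> g = ?d g k" by auto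
    have "?d g j = 0" using Ld[OF that, of g] dnn[of "Z (sel g j)" "v j"] False
      by (smt (verit) mult_neg_pos)
    moreover have "\<delta> g = 0" using Ld[OF k(1), of g] dnn[of "Z (sel g k)" "v k"] False k(2)
      by (smt (verit) mult_neg_pos)
    ultimately show ?thesis by simp
  qed
  have each: "\<bar>?F True j - ?F False j\<bar> \<le> L * (\<delta> True + \<delta> False)" if "j < r" for j
    using lip[OF that, of True] lip[OF that, of False] Lmono[OF that, of True] Lmono[OF that, of False]
    by (simp add: distrib_left)
  have eqZ: "proj n p X V q (X i) = Z i" for i using Z_def by simp
  have "\<bar>(\<Sum>j<r. ?F True j) / real r - (\<Sum>j<r. ?F False j) / real r\<bar>
      = \<bar>\<Sum>j<r. ?F True j - ?F False j\<bar> / real r"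
    by (simp add: sum_subtractf diff_divide_distrib[symmetric])
  also have "\<dots> \<le> (\<Sum>j<r. \<bar>?F True j - ?F False j\<bar>) / real r"
    by (intro divide_right_mono sum_abs) simp
  also have "\<dots> \<le> (\<Sum>j<r. L * (\<delta> True + \<delta> False)) / real r"
    by (intro divide_right_mono sum_mono each) auto
  also have "\<dots> = L * (\<delta> True + \<delta> False)" using r by simp
  finally show ?thesis by (simp add: eqZ)
qed

end
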